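(* Let $f(1),\dots,f(T)\in\mathbb R$ and $0=\nu_0<\nu_1<\dots<\nu_M=T$ be such that $f(\nu_m+1)=\dots=f(\nu_{m+1})$ for all $m=0,\dots,M-1$. Let $\Delta$ be a positive integer and suppose that for some $1\le m\le M-1$, $|\nu_m-\nu_{m'}|\ge\Delta$ for all $m'\ne m$. Then, writing $\nu=\nu_m$, \[ \max\Bigl\{\Bigl|\sum_{r=1}^{\nu-\Delta}f(r)\Bigr|,\ \Bigl|\sum_{r=1}^{\nu}f(r)\Bigr|,\ \Bigl|\sum_{r=1}^{\nu+\Delta}f(r)\Bigr|\Bigr\}\ \ge\ \Delta\,|f(\nu)-f(\nu+1)|/4. \]
   Context: An empty sum equals $0$. *)

theory Defs
  imports Complex_Main
begin

end

theory Submission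
  imports Defs
begin

lemma split_const:
  fixes f :: "nat \<Rightarrow> real"
  assumes "\<And>r. a + 1 \<le> r \<Longrightarrow> r \<le> a + d \<Longrightarrow> f r = c"
  shows "(\<Sum>r=1..a + d. f r) = (\<Sum>r=1..a. f r) + real d * c"
proof -
  have "(\<Sum>r=1..a + d. f r) = (\<Sum>r=1..a. f r) + (\<Sum>r=a+1..a+d. f r)"
    by (rule sum.ub_add_nat) simp
  also have "(\<Sum>r=a+1..a+d. f r) = (\<Sum>r=a+1..a+d. c)"
    using assms by (intro sum.cong) auto
  also have "\<dots> = real d * c" by simp
  finally show ?thesis .
qed

theorem lemma21:
  fixes f :: "nat \<Rightarrow> real" and T M \<Delta> m :: nat and \<nu> :: "nat \<Rightarrow> nat"
  assumes nu0: "\<nu> 0 = 0" and nuM: "\<nu> M = T"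
    and mono: "\<And>i. i < M \<Longrightarrow> \<nu> i < \<nu> (Suc i)"
    and const: "\<And>i r. i < M \<Longrightarrow> \<nu> i + 1 \<le> r \<Longrightarrow> r \<le> \<nu> (Suc i) \<Longrightarrow> f r = f (\<nu> (Suc i))"
    and Dpos: "\<Delta> > 0"
    and m: "1 \<le> m" "m \<le> M - 1"
    and sep: "\<And>m'. m' \<le> M \<Longrightarrow> m' \<noteq> m \<Longrightarrow> \<bar>int (\<nu> m) - int (\<nu> m')\<bar> \<ge> int \<Delta>"
  shows "max (max \<bar>\<Sum>r=1..\<nu> m - \<Delta>. f r\<bar> \<bar>\<Sum>r=1..\<nu> m. f r\<bar>) \<bar>\<Sum>r=1..\<nu> m + \<Delta>. f r\<bar>
           \<ge> real \<Delta> * \<bar>f (\<nu> m) - f (\<nu> m + 1)\<bar> / 4"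
proof -
  obtain k where k: "m = Suc k" using m(1) by (cases m) auto
  have kM: "k < M" "m < M" using m k by auto
  have lt1: "\<nu> k < \<nu> m" using mono[OF kM(1)] k by simp
  have lt2: "\<nu> m < \<nu> (Suc m)" using mono[OF kM(2)] .
  have s1: "\<bar>int (\<nu> m) - int (\<nu> k)\<bar> \<ge> int \<Delta>" using sep[of k] kM k by auto
  have s2: "\<bar>int (\<nu> m) - int (\<nu> (Suc m))\<bar> \<ge> int \<Delta>" using sep[of "Suc m"] kM by auto
  have d1: "\<nu> k + \<Delta> \<le> \<nu> m" using s1 lt1 by linarith
  have d2: "\<nu> m + \<Delta> \<le> \<nu> (Suc m)" using s2 lt2 by linarith
  define a where "a = f (\<nu> m)"
  define b where "b = f (\<nu> m + 1)"
  have fb: "f (\<nu> m + 1) = f (\<nu> (Suc m))" using const[OF kM(2), of "\<nu> m + 1"] lt2 by simp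
  have e1: "(\<Sum>r=1..(\<nu> m - \<Delta>) + \<Delta>. f r) = (\<Sum>r=1..\<nu> m - \<Delta>. f r) + real \<Delta> * a"
    unfolding a_def
  proof (rule split_const)
    fix r assume "\<nu> m - \<Delta> + 1 \<le> r" "r \<le> \<nu> m - \<Delta> + \<Delta>"
    then show "f r = f (\<nu> m)" using const[OF kM(1), of r] k d1 by simp
  qed
  have e2: "(\<Sum>r=1..\<nu> m + \<Delta>. f r) = (\<Sum>r=1..\<nu> m. f r) + real \<Delta> * b"
    unfolding b_def
  proof (rule split_const)
    fix r assume "\<nu> m + 1 \<le> r" "r \<le> \<nu> m + \<Delta>"
    then show "f r = f (\<nu> m + 1)" using const[OF kM(2), of r] d2 fb by simp
  qed
  have eq: "\<nu> m - \<Delta> + \<Delta> = \<nu> m" using d1 by simp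
  define S0 where "S0 = (\<Sum>r=1..\<nu> m - \<Delta>. f r)"
  define S1 where "S1 = (\<Sum>r=1..\<nu> m. f r)"
  define S2 where "S2 = (\<Sum>r=1..\<nu> m + \<Delta>. f r)"
  have E1: "S1 = S0 + real \<Delta> * a" using e1 eq S0_def S1_def by simp
  have E2: "S2 = S1 + real \<Delta> * b" using e2 S1_def S2_def by simp
  have "2 * S1 - S0 - S2 = real \<Delta> * (a - b)"
    using E1 E2 by (simp add: algebra_simps)
  then have "real \<Delta> * \<bar>a - b\<bar> = \<bar>2 * S1 - S0 - S2\<bar>"
    by (simp add: abs_mult)
  also have "\<dots> \<le> 4 * max (max \<bar>S0\<bar> \<bar>S1\<bar>) \<bar>S2\<bar>" by linarith
  finally show ?thesis unfolding S0_def S1_def S2_def a_def b_def by simp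
qed

end
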